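(* Let $p \geq 3$ be a prime and $x, y \in \mathbb{Z}$ with $x^2 - 2 = y^p$ and $y \neq -1$. Then $x$ and $y$ are both odd, $y \equiv 7 \pmod 8$, and every prime dividing $y$ is $\equiv \pm 1 \pmod 8$. *)

theory Defs
  imports "HOL-Computational_Algebra.Primes"
begin

end

theory Submission
  imports Defs "HOL-Number_Theory.Number_Theory"
begin

lemma odd_mod8: "odd (y::int) \<Longrightarrow> y mod 8 = 1 \<or> y mod 8 = 3 \<or> y mod 8 = 5 \<or> y mod 8 = 7"
  by presburger

lemma even_mod8: "even (a::int) \<Longrightarrow> a mod 8 \<noteq> 7"
  by presburger

lemma odd_sq_mod8: "odd (y::int) \<Longrightarrow> y^2 mod 8 = 1"
proof -
  assume "odd y"
  then have "y mod 8 = 1 \<or> y mod 8 = 3 \<or> y mod 8 = 5 \<or> y mod 8 = 7" by presburger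
  moreover have "y^2 mod 8 = ((y mod 8)^2) mod 8" by (simp add: power_mod)
  ultimately show ?thesis by auto
qed

lemma gauss_card_2:
  fixes q :: nat
  assumes "prime q" "q mod 8 = 3 \<or> q mod 8 = 5"
  shows "Legendre 2 (int q) = -1"
proof -
  have q2: "2 < q" using assms by auto
  have nc: "[2 \<noteq> 0] (mod int q)"
  proof
    assume "[2 = 0] (mod int q)"
    then have "int q dvd 2" by (simp add: cong_0_iff)
    then have "q dvd 2" by presburger
    then show False using q2 by (simp add: nat_dvd_not_less)
  qed
  interpret G: GAUSS q 2 using assms q2 nc by unfold_locales auto
  define h where "h = (int q - 1) div 2"
  have hq: "2 * h < int q" unfolding h_def by linarith
  have "G.E = (\<lambda>x. 2 * x) ` {h div 2 <.. h}"
  proof -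
    have "G.C = (\<lambda>x. 2 * x) ` {0 <.. h}"
      unfolding G.C_def G.B_def G.A_def h_def[symmetric] image_image
    proof (rule image_cong[OF refl])
      fix x assume "x \<in> {0<..h}"
      then show "x * 2 mod int q = 2 * x" using hq by auto
    qed
    then show ?thesis unfolding G.E_def h_def[symmetric] by (auto simp: image_iff)
  qed
  then have "card G.E = card {h div 2 <.. h}"
    by (simp add: card_image inj_on_def)
  also have "\<dots> = nat (h - h div 2)" by simp
  finally have cE: "card G.E = nat (h - h div 2)" .
  have "odd (nat (h - h div 2))"
  proof -
    have "int q mod 8 = 3 \<or> int q mod 8 = 5" using assms(2) by presburger
    then have "odd (h - h div 2)" "h - h div 2 \<ge> 0" unfolding h_def by presburger+
    then show ?thesis by (simp add: even_nat_iff)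
  qed
  then show ?thesis using G.gauss_lemma cE by simp
qed

lemma two_qr_prime:
  fixes q :: int and x :: int
  assumes "prime q" "q dvd x^2 - 2" "q \<noteq> 2"
  shows "q mod 8 = 1 \<or> q mod 8 = 7"
proof (rule ccontr)
  assume nn: "\<not> (q mod 8 = 1 \<or> q mod 8 = 7)"
  have qpos: "q > 0" using assms(1) prime_gt_0_int by blast
  have "q \<ge> 2" using assms(1) prime_ge_2_int by blast
  have "q > 2" using assms(3) \<open>q \<ge> 2\<close> by linarith
  then have "odd q"
    using assms(1) prime_odd_int[of q] by blast
  then have m: "q mod 8 = 3 \<or> q mod 8 = 5" using nn odd_mod8[of q] by auto
  define n where "n = nat q"
  have qn: "q = int n" using qpos n_def by simp
  have pn: "prime n" using assms(1) qn by simp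
  have "int (n mod 8) = q mod 8" using qn by (simp add: of_nat_mod)
  then have nm: "n mod 8 = 3 \<or> n mod 8 = 5" using m by auto
  have L: "Legendre 2 (int n) = -1" by (rule gauss_card_2[OF pn nm])
  have c: "[x^2 = 2] (mod q)" using assms(2) by (simp add: cong_iff_dvd_diff)
  have "QuadRes q 2" unfolding QuadRes_def using c by blast
  moreover have "\<not> [2 = 0] (mod q)"
  proof
    assume "[2 = 0] (mod q)"
    then have "q dvd 2" by (simp add: cong_0_iff)
    then have "q \<le> 2" by (simp add: zdvd_imp_le)
    then show False using \<open>odd q\<close> \<open>q \<ge> 2\<close> by presburger
  qed
  ultimately have "Legendre 2 q = 1" by (simp add: Legendre_def)
  then show False using L qn by simp
qed

theorem theorem2p2:
  fixes p :: nat and x y :: int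
  assumes "prime p" and "p \<ge> 3"
    and "x ^ 2 - 2 = y ^ p"
    and "y \<noteq> -1"
  shows "odd x \<and> odd y \<and> y mod 8 = 7 \<and>
         (\<forall>q :: int. prime q \<and> q dvd y \<longrightarrow> q mod 8 = 1 \<or> q mod 8 = 7)"
proof -
  have ox: "odd x"
  proof
    assume "even x"
    then obtain k where k: "x = 2 * k" by blast
    have "y^p = 2 * (2 * k^2 - 1)" using assms(3) k by (simp add: power2_eq_square algebra_simps)
    then have "even (y^p)" by simp
    then have "even y" using assms(2) by simp
    then obtain j where j: "y = 2 * j" by blast
    have "y^p = 8 * (j^3 * (2*j)^(p-3))"
    proof -
      have "y^p = y^3 * y^(p-3)" using assms(2) by (simp add: power_add[symmetric])
      then show ?thesis using j by (simp add: power_mult_distrib)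
    qed
    then have "x^2 - 2 = 8 * (j^3 * (2*j)^(p-3))" using assms(3) by simp
    then have "4 * k^2 - 2 = 8 * (j^3 * (2*j)^(p-3))" using k by (simp add: power_mult_distrib)
    then have "2 = 4 * (k^2 - 2 * (j^3 * (2*j)^(p-3)))" by (simp add: algebra_simps)
    then have "(4::int) dvd 2" by (metis dvd_triv_left)
    then show False by simp
  qed
  have x8: "x^2 mod 8 = 1" using odd_sq_mod8[OF ox] .
  have "y^p mod 8 = (x^2 mod 8 - 2) mod 8" unfolding assms(3)[symmetric] by (simp add: mod_diff_left_eq)
  then have yp8: "y^p mod 8 = 7" using x8 by simp
  have oy: "odd y"
  proof
    assume "even y"
    then have "even (y^p)" using assms(2) by simp
    with yp8 even_mod8 show False by blast
  qed
  have "odd p" using assms(1,2) prime_odd_nat[of p] by auto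
  then obtain m where pm: "p = 2*m+1" using oddE by blast
  have "y^p = y * (y^2)^m" using pm by (simp add: power_add power_mult)
  then have "y^p mod 8 = (y mod 8) * ((y^2)^m mod 8) mod 8"
    by (simp add: mod_mult_eq)
  moreover have "(y^2)^m mod 8 = 1"
    using power_mod[of "y^2" 8 m] odd_sq_mod8[OF oy] by simp
  ultimately have "y^p mod 8 = y mod 8" by simp
  then have y8: "y mod 8 = 7" using yp8 by simp
  have "\<forall>q :: int. prime q \<and> q dvd y \<longrightarrow> q mod 8 = 1 \<or> q mod 8 = 7"
  proof (intro allI impI)
    fix q :: int assume h: "prime q \<and> q dvd y"
    have "q dvd y^p" using dvd_power_le[of q y 1 p] h assms(2) by simp
    then have d: "q dvd x^2 - 2" using assms(3) by simp
    have "q \<noteq> 2" using h oy by auto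
    then show "q mod 8 = 1 \<or> q mod 8 = 7" using two_qr_prime[of q x] h d by blast
  qed
  then show ?thesis using ox oy y8 by blast
qed

end
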